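(* Let $n\ge 4$. Let $S_n$ be the star on $n$ vertices and let $S_{n-3,1}$ be the tree on $n$ vertices consisting of a vertex $u$ adjacent to $n-3$ leaves and to one further vertex $w$ of degree $2$ whose other neighbor is a leaf. Then for every tree $T$ on $n$ vertices with $T\not\cong S_n$ and $T\not\cong S_{n-3,1}$, $$\rho_{ABC}(T)<\rho_{ABC}(S_{n-3,1})<\rho_{ABC}(S_n).$$
   Context: For a simple connected graph $G$ with vertex set $\{v_1,\dots,v_n\}$ and degrees $d_i$, the ABC matrix is $M(G)=(m_{ij})_{n\times n}$ with $m_{ij}=\sqrt{(d_i+d_j-2)/(d_id_j)}$ if $v_iv_j$ is an edge and $m_{ij}=0$ otherwise. The ABC spectral radius $\rho_{ABC}(G)$ is the largest eigenvalue of $M(G)$. The tree $S_{n-3,1}$ (a double star) is the unique tree on $n$ vertices with maximum degree $n-2$. *)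

theory Defs
  imports "Jordan_Normal_Form.Char_Poly"
begin

definition simple_graph :: "nat \<Rightarrow> (nat \<Rightarrow> nat \<Rightarrow> bool) \<Rightarrow> bool" where
  "simple_graph n E \<longleftrightarrow>
     (\<forall>i j. E i j \<longrightarrow> i < n \<and> j < n) \<and>
     (\<forall>i j. E i j \<longrightarrow> E j i) \<and> (\<forall>i. \<not> E i i)"

definition graph_edges :: "nat \<Rightarrow> (nat \<Rightarrow> nat \<Rightarrow> bool) \<Rightarrow> (nat \<times> nat) set" where
  "graph_edges n E = {(i, j). i < j \<and> j < n \<and> E i j}"

definition graph_connected :: "nat \<Rightarrow> (nat \<Rightarrow> nat \<Rightarrow> bool) \<Rightarrow> bool" where
  "graph_connected n E \<longleftrightarrow> (\<forall>i<n. \<forall>j<n. E\<^sup>*\<^sup>* i j)"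

definition is_tree :: "nat \<Rightarrow> (nat \<Rightarrow> nat \<Rightarrow> bool) \<Rightarrow> bool" where
  "is_tree n E \<longleftrightarrow> simple_graph n E \<and> graph_connected n E \<and>
     card (graph_edges n E) = n - 1"

definition deg :: "nat \<Rightarrow> (nat \<Rightarrow> nat \<Rightarrow> bool) \<Rightarrow> nat \<Rightarrow> nat" where
  "deg n E i = card {j. j < n \<and> E i j}"

definition graph_iso :: "nat \<Rightarrow> (nat \<Rightarrow> nat \<Rightarrow> bool) \<Rightarrow> (nat \<Rightarrow> nat \<Rightarrow> bool) \<Rightarrow> bool" where
  "graph_iso n E F \<longleftrightarrow> (\<exists>f. bij_betw f {0..<n} {0..<n} \<and>
     (\<forall>i<n. \<forall>j<n. E i j \<longleftrightarrow> F (f i) (f j)))"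

definition abc_matrix :: "nat \<Rightarrow> (nat \<Rightarrow> nat \<Rightarrow> bool) \<Rightarrow> real mat" where
  "abc_matrix n E = mat n n (\<lambda>(i, j).
     if E i j then sqrt ((real (deg n E i) + real (deg n E j) - 2) / (real (deg n E i) * real (deg n E j)))
     else 0)"

definition rho_abc :: "nat \<Rightarrow> (nat \<Rightarrow> nat \<Rightarrow> bool) \<Rightarrow> real" where
  "rho_abc n E = Max {k. eigenvalue (abc_matrix n E) k}"

definition star_graph :: "nat \<Rightarrow> nat \<Rightarrow> nat \<Rightarrow> bool" where
  "star_graph n i j \<longleftrightarrow> i < n \<and> j < n \<and> i \<noteq> j \<and> (i = 0 \<or> j = 0)"

text \<open>S_{n-3,1}: u = 0 adjacent to w = 1 and to leaves 2..n-2; w adjacent to leaf n-1.\<close>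
definition double_star_graph :: "nat \<Rightarrow> nat \<Rightarrow> nat \<Rightarrow> bool" where
  "double_star_graph n i j \<longleftrightarrow>
     (i = 0 \<and> 1 \<le> j \<and> j \<le> n - 2) \<or> (j = 0 \<and> 1 \<le> i \<and> i \<le> n - 2) \<or>
     (i = 1 \<and> j = n - 1) \<or> (j = 1 \<and> i = n - 1)"

end

theory Submission
  imports Defs "Jordan_Normal_Form.Spectral_Radius"
begin


lemma eig_iff:
  fixes f :: "nat \<times> nat \<Rightarrow> real"
  shows "eigenvalue (mat n n f) k \<longleftrightarrow>
    (\<exists>x. (\<exists>i<n. x i \<noteq> 0) \<and> (\<forall>i<n. (\<Sum>j<n. f (i,j) * x j) = k * x i))"
proof
  assume "eigenvalue (mat n n f) k"
  then obtain v where v: "v \<in> carrier_vec n" "v \<noteq> 0\<^sub>v n" "mat n n f *\<^sub>v v = k \<cdot>\<^sub>v v"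
    unfolding eigenvalue_def eigenvector_def by auto
  have "\<exists>i<n. v $ i \<noteq> 0"
  proof (rule ccontr)
    assume "\<not> ?thesis"
    hence "v = 0\<^sub>v n" using v(1) by (intro eq_vecI) auto
    thus False using v(2) by simp
  qed
  moreover have "\<forall>i<n. (\<Sum>j<n. f (i,j) * v $ j) = k * v $ i"
  proof (intro allI impI)
    fix i assume i: "i < n"
    have "(mat n n f *\<^sub>v v) $ i = (k \<cdot>\<^sub>v v) $ i" using v(3) by simp
    thus "(\<Sum>j<n. f (i,j) * v $ j) = k * v $ i"
      using i v(1) by (auto simp: scalar_prod_def lessThan_atLeast0)
  qed
  ultimately show "\<exists>x. (\<exists>i<n. x i \<noteq> 0) \<and> (\<forall>i<n. (\<Sum>j<n. f (i,j) * x j) = k * x i)" by blast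
next
  assume "\<exists>x. (\<exists>i<n. x i \<noteq> 0) \<and> (\<forall>i<n. (\<Sum>j<n. f (i,j) * x j) = k * x i)"
  then obtain x where x: "\<exists>i<n. x i \<noteq> 0" "\<forall>i<n. (\<Sum>j<n. f (i,j) * x j) = k * x i" by blast
  let ?v = "vec n x"
  have "?v \<noteq> 0\<^sub>v n" using x(1) by (auto simp: vec_eq_iff)
  moreover have "mat n n f *\<^sub>v ?v = k \<cdot>\<^sub>v ?v"
    using x(2) by (intro eq_vecI) (auto simp: scalar_prod_def lessThan_atLeast0)
  ultimately show "eigenvalue (mat n n f) k"
    unfolding eigenvalue_def eigenvector_def by (intro exI[of _ ?v]) auto
qed


lemma finite_argmax:
  fixes r :: "nat \<Rightarrow> real"
  assumes "n > 0"
  shows "\<exists>i<n. \<forall>j<n. r j \<le> r i"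
proof -
  have "finite (r ` {..<n})" "r ` {..<n} \<noteq> {}" using assms by auto
  hence "Max (r ` {..<n}) \<in> r ` {..<n}" by (rule Max_in)
  then obtain i where i: "i < n" "r i = Max (r ` {..<n})" by auto
  have "\<forall>j<n. r j \<le> r i" using i by auto
  thus ?thesis using i by blast
qed

lemma collatz:
  fixes f :: "nat \<times> nat \<Rightarrow> real" and x v :: "nat \<Rightarrow> real"
  assumes f: "\<forall>i<n. \<forall>j<n. f(i,j) \<ge> 0" and x: "\<forall>i<n. x i > 0"
    and c: "\<forall>i<n. (\<Sum>j<n. f(i,j) * x j) \<le> c * x i"
    and v: "\<exists>i<n. v i \<noteq> 0" and ev: "\<forall>i<n. (\<Sum>j<n. f(i,j) * v j) = k * v i"
  shows "\<bar>k\<bar> \<le> c"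
proof -
  define r where "r j = \<bar>v j\<bar> / x j" for j
  from v obtain i0 where i0: "i0 < n" "v i0 \<noteq> 0" by blast
  then obtain i where i: "i < n" "\<forall>j<n. r j \<le> r i" using finite_argmax[of n r] by auto
  define m where "m = r i"
  have "r i0 > 0" using i0 x unfolding r_def by auto
  hence m0: "m > 0" using i i0 unfolding m_def by force
  have vi: "\<bar>v i\<bar> = m * x i" using x i unfolding m_def r_def by auto
  have vj: "\<bar>v j\<bar> \<le> m * x j" if "j < n" for j
  proof -
    have "r j \<le> m" using i that unfolding m_def by auto
    thus ?thesis using x that unfolding r_def by (auto simp: divide_le_eq)
  qed
  have "\<bar>k\<bar> * \<bar>v i\<bar> = \<bar>\<Sum>j<n. f(i,j) * v j\<bar>" using ev i by (simp add: abs_mult)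
  also have "\<dots> \<le> (\<Sum>j<n. \<bar>f(i,j) * v j\<bar>)" by (rule sum_abs)
  also have "\<dots> \<le> (\<Sum>j<n. f(i,j) * (m * x j))"
    using f i vj by (intro sum_mono) (auto simp: abs_mult intro: mult_left_mono)
  also have "\<dots> = m * (\<Sum>j<n. f(i,j) * x j)" by (simp add: sum_distrib_left algebra_simps)
  also have "\<dots> \<le> m * (c * x i)" using c i m0 by auto
  also have "\<dots> = c * \<bar>v i\<bar>" using vi by simp
  finally have "\<bar>k\<bar> * \<bar>v i\<bar> \<le> c * \<bar>v i\<bar>" .
  moreover have "\<bar>v i\<bar> > 0" using vi m0 x i by auto
  ultimately show ?thesis by auto
qed


lemma eig_iff_gen:
  fixes f :: "nat \<times> nat \<Rightarrow> 'a::field"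
  shows "eigenvalue (mat n n f) k \<longleftrightarrow>
    (\<exists>x. (\<exists>i<n. x i \<noteq> 0) \<and> (\<forall>i<n. (\<Sum>j<n. f (i,j) * x j) = k * x i))"
proof
  assume "eigenvalue (mat n n f) k"
  then obtain v where v: "v \<in> carrier_vec n" "v \<noteq> 0\<^sub>v n" "mat n n f *\<^sub>v v = k \<cdot>\<^sub>v v"
    unfolding eigenvalue_def eigenvector_def by auto
  have "\<exists>i<n. v $ i \<noteq> 0"
  proof (rule ccontr)
    assume "\<not> ?thesis"
    hence "v = 0\<^sub>v n" using v(1) by (intro eq_vecI) auto
    thus False using v(2) by simp
  qed
  moreover have "\<forall>i<n. (\<Sum>j<n. f (i,j) * v $ j) = k * v $ i"
  proof (intro allI impI)
    fix i assume i: "i < n"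
    have "(mat n n f *\<^sub>v v) $ i = (k \<cdot>\<^sub>v v) $ i" using v(3) by simp
    thus "(\<Sum>j<n. f (i,j) * v $ j) = k * v $ i"
      using i v(1) by (auto simp: scalar_prod_def lessThan_atLeast0)
  qed
  ultimately show "\<exists>x. (\<exists>i<n. x i \<noteq> 0) \<and> (\<forall>i<n. (\<Sum>j<n. f (i,j) * x j) = k * x i)" by blast
next
  assume "\<exists>x. (\<exists>i<n. x i \<noteq> 0) \<and> (\<forall>i<n. (\<Sum>j<n. f (i,j) * x j) = k * x i)"
  then obtain x where x: "\<exists>i<n. x i \<noteq> 0" "\<forall>i<n. (\<Sum>j<n. f (i,j) * x j) = k * x i" by blast
  let ?v = "vec n x"
  have "?v \<noteq> 0\<^sub>v n" using x(1) by (auto simp: vec_eq_iff)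
  moreover have "mat n n f *\<^sub>v ?v = k \<cdot>\<^sub>v ?v"
    using x(2) by (intro eq_vecI) (auto simp: scalar_prod_def lessThan_atLeast0)
  ultimately show "eigenvalue (mat n n f) k"
    unfolding eigenvalue_def eigenvector_def by (intro exI[of _ ?v]) auto
qed

lemma sym_has_eig:
  fixes f :: "nat \<times> nat \<Rightarrow> real"
  assumes n: "n > 0" and sym: "\<forall>i<n. \<forall>j<n. f(i,j) = f(j,i)"
  shows "\<exists>k. eigenvalue (mat n n f) k"
proof -
  let ?g = "\<lambda>ij. complex_of_real (f ij)"
  have "mat n n ?g \<in> carrier_mat n n" by simp
  from spectrum_non_empty[OF this n] obtain k where "eigenvalue (mat n n ?g) k"
    unfolding spectrum_def by auto
  then obtain x where x: "\<exists>i<n. x i \<noteq> 0" "\<forall>i<n. (\<Sum>j<n. ?g (i,j) * x j) = k * x i"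
    unfolding eig_iff_gen by blast
  define s where "s = (\<Sum>i<n. cnj (x i) * (\<Sum>j<n. ?g (i,j) * x j))"
  define N where "N = (\<Sum>i<n. cnj (x i) * x i)"
  have s1: "s = k * N" unfolding s_def N_def using x(2)
    by (simp add: sum_distrib_left algebra_simps)
  have s2: "s = (\<Sum>i<n. \<Sum>j<n. ?g (i,j) * (cnj (x i) * x j))"
    unfolding s_def by (simp add: sum_distrib_left algebra_simps)
  have "cnj s = (\<Sum>i<n. \<Sum>j<n. ?g (i,j) * (x i * cnj (x j)))"
    unfolding s2 by (simp add: algebra_simps)
  also have "\<dots> = (\<Sum>j<n. \<Sum>i<n. ?g (i,j) * (x i * cnj (x j)))" by (rule sum.swap)
  also have "\<dots> = s" unfolding s2 using sym by (intro sum.cong refl) (auto simp: algebra_simps)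
  finally have "cnj s = s" .
  hence sr: "Im s = 0" by (metis complex_cnj_complex_of_real Reals_cnj_iff complex_is_Real_iff)
  have Nr: "N = of_real (\<Sum>i<n. (norm (x i))^2)" unfolding N_def
    by (simp add: complex_norm_square mult.commute del: of_real_power)
  from x(1) obtain i0 where i0: "i0 < n" "x i0 \<noteq> 0" by blast
  have "(\<Sum>i<n. (norm (x i))^2) > 0"
    by (rule sum_pos2[of _ i0]) (use i0 in auto)
  hence Npos: "Re N > 0" "Im N = 0" using Nr by auto
  have kr: "Im k = 0"
  proof -
    have "Im s = Im k * Re N + Re k * Im N" using s1 by simp
    thus ?thesis using sr Npos by simp
  qed
  have eqRe: "(\<Sum>j<n. f (i,j) * Re (x j)) = Re k * Re (x i)" if "i < n" for i
  proof -
    have "Re (\<Sum>j<n. ?g (i,j) * x j) = Re (k * x i)" using x(2) that by simp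
    thus ?thesis using kr by (simp add: Re_sum)
  qed
  have eqIm: "(\<Sum>j<n. f (i,j) * Im (x j)) = Re k * Im (x i)" if "i < n" for i
  proof -
    have "Im (\<Sum>j<n. ?g (i,j) * x j) = Im (k * x i)" using x(2) that by simp
    thus ?thesis using kr by (simp add: Im_sum)
  qed
  show ?thesis
  proof (cases "Re (x i0) = 0")
    case True
    hence "Im (x i0) \<noteq> 0" using i0 complex.expand by auto
    hence "eigenvalue (mat n n f) (Re k)" unfolding eig_iff_gen
      using eqIm i0 by (intro exI[of _ "\<lambda>j. Im (x j)"]) auto
    thus ?thesis by blast
  next
    case False
    hence "eigenvalue (mat n n f) (Re k)" unfolding eig_iff_gen
      using eqRe i0 by (intro exI[of _ "\<lambda>j. Re (x j)"]) auto
    thus ?thesis by blast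
  qed
qed


lemma cs_sum:
  fixes a b :: "nat \<Rightarrow> real"
  shows "(\<Sum>j\<in>S. a j * b j)^2 \<le> (\<Sum>j\<in>S. (a j)^2) * (\<Sum>j\<in>S. (b j)^2)"
proof -
  have "0 \<le> (\<Sum>i\<in>S. \<Sum>j\<in>S. (a i * b j - a j * b i)^2)" by (intro sum_nonneg) auto
  also have "\<dots> = (\<Sum>i\<in>S. \<Sum>j\<in>S. (a i)^2 * (b j)^2 + (a j)^2 * (b i)^2 - 2 * ((a i * b i) * (a j * b j)))"
    by (intro sum.cong refl) (simp add: power2_eq_square algebra_simps)
  also have "\<dots> = 2 * ((\<Sum>j\<in>S. (a j)^2) * (\<Sum>j\<in>S. (b j)^2)) - 2 * (\<Sum>j\<in>S. a j * b j)^2"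
  proof -
    have e1: "(\<Sum>i\<in>S. \<Sum>j\<in>S. (a i)^2 * (b j)^2) = (\<Sum>j\<in>S. (a j)^2) * (\<Sum>j\<in>S. (b j)^2)"
      by (simp only: sum_product)
    have e2: "(\<Sum>i\<in>S. \<Sum>j\<in>S. (a j)^2 * (b i)^2) = (\<Sum>j\<in>S. (a j)^2) * (\<Sum>j\<in>S. (b j)^2)"
      by (simp only: sum_product sum.swap[of "\<lambda>i j. (a j)^2 * (b i)^2"])
    have e3: "(\<Sum>i\<in>S. \<Sum>j\<in>S. (a i * b i) * (a j * b j)) = (\<Sum>j\<in>S. a j * b j)^2"
      by (simp only: sum_product power2_eq_square)
    have "(\<Sum>i\<in>S. \<Sum>j\<in>S. (a i)^2 * (b j)^2 + (a j)^2 * (b i)^2 - 2 * ((a i * b i) * (a j * b j)))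
       = (\<Sum>i\<in>S. \<Sum>j\<in>S. (a i)^2 * (b j)^2) + (\<Sum>i\<in>S. \<Sum>j\<in>S. (a j)^2 * (b i)^2)
         - 2 * (\<Sum>i\<in>S. \<Sum>j\<in>S. (a i * b i) * (a j * b j))"
      by (simp only: sum_subtractf sum.distrib sum_distrib_left)
    then show ?thesis unfolding e1 e2 e3 by simp
  qed
  finally show ?thesis by simp
qed

lemma sum_N: "(\<Sum>j\<in>{j. j < (n::nat) \<and> P j}. g j) = (\<Sum>j<n. if P j then g j else (0::real))"
proof -
  have "{j. j < n \<and> P j} = {j\<in>{..<n}. P j}" by auto
  hence "(\<Sum>j\<in>{j. j < n \<and> P j}. g j) = (\<Sum>j\<in>{j\<in>{..<n}. P j}. g j)" by simp
  also have "\<dots> = (\<Sum>j<n. if P j then g j else 0)" by (rule sum.inter_filter) simp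
  finally show ?thesis .
qed

lemma cs_bound:
  fixes w :: "nat \<times> nat \<Rightarrow> real" and E :: "nat \<Rightarrow> nat \<Rightarrow> bool" and d :: "nat \<Rightarrow> nat"
  assumes sym: "\<forall>i j. E i j \<longrightarrow> E j i"
    and wz: "\<forall>i<n. \<forall>j<n. \<not> E i j \<longrightarrow> w(i,j) = 0"
    and d: "\<forall>j<n. d j = card {i. i < n \<and> E j i}"
    and Cb: "\<forall>i<n. (\<Sum>j\<in>{j. j < n \<and> E i j}. (w(i,j))^2 * d j) \<le> C" and C0: "C \<ge> 0"
    and v: "\<exists>i<n. v i \<noteq> 0" and ev: "\<forall>i<n. (\<Sum>j<n. w(i,j) * v j) = k * v i"
  shows "k^2 \<le> C"
proof -
  let ?N = "\<lambda>i. {j. j < n \<and> E i j}"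
  have dpos: "d j > 0" if "j \<in> ?N i" "i < n" for i j
  proof -
    have "i \<in> ?N j" using that sym by auto
    hence "?N j \<noteq> {}" by blast
    thus ?thesis using d that by (simp add: card_gt_0_iff)
  qed
  have row: "(k * v i)^2 \<le> C * (\<Sum>j\<in>?N i. (v j)^2 / d j)" if i: "i < n" for i
  proof -
    have "k * v i = (\<Sum>j<n. w(i,j) * v j)" using ev i by simp
    also have "\<dots> = (\<Sum>j\<in>?N i. w(i,j) * v j)"
      using wz i by (intro sum.mono_neutral_right) auto
    also have "\<dots> = (\<Sum>j\<in>?N i. (w(i,j) * sqrt (d j)) * (v j / sqrt (d j)))"
    proof (intro sum.cong refl)
      fix j assume "j \<in> ?N i"
      hence "d j > 0" using dpos i by blast
      thus "w(i,j) * v j = (w(i,j) * sqrt (d j)) * (v j / sqrt (d j))" by simp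
    qed
    finally have "(k * v i)^2 \<le> (\<Sum>j\<in>?N i. (w(i,j) * sqrt (d j))^2) * (\<Sum>j\<in>?N i. (v j / sqrt (d j))^2)"
      using cs_sum by metis
    also have "\<dots> = (\<Sum>j\<in>?N i. (w(i,j))^2 * d j) * (\<Sum>j\<in>?N i. (v j)^2 / d j)"
      by (simp add: power_mult_distrib power_divide)
    also have "\<dots> \<le> C * (\<Sum>j\<in>?N i. (v j)^2 / d j)"
      using Cb i by (intro mult_right_mono sum_nonneg) auto
    finally show ?thesis .
  qed
  have "k^2 * (\<Sum>i<n. (v i)^2) = (\<Sum>i<n. (k * v i)^2)"
    by (simp add: sum_distrib_left power_mult_distrib)
  also have "\<dots> \<le> (\<Sum>i<n. C * (\<Sum>j\<in>?N i. (v j)^2 / d j))" using row by (intro sum_mono) auto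
  also have "\<dots> = C * (\<Sum>i<n. \<Sum>j<n. (if E i j then (v j)^2 / d j else 0))"
    by (simp only: sum_N sum_distrib_left)
  also have "(\<Sum>i<n. \<Sum>j<n. (if E i j then (v j)^2 / d j else 0)) = (\<Sum>j<n. \<Sum>i<n. (if E i j then (v j)^2 / d j else 0))"
    by (rule sum.swap)
  also have "\<dots> \<le> (\<Sum>j<n. (v j)^2)"
  proof (intro sum_mono)
    fix j assume j: "j \<in> {..<n}"
    have "(\<Sum>i<n. (if E i j then (v j)^2 / d j else 0)) = (\<Sum>i\<in>{i. i < n \<and> E j i}. (v j)^2 / d j)"
      unfolding sum_N using sym by (intro sum.cong refl) auto
    also have "\<dots> = d j * ((v j)^2 / d j)" using d j by simp
    also have "\<dots> \<le> (v j)^2" by (cases "d j = 0") auto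
    finally show "(\<Sum>i<n. (if E i j then (v j)^2 / d j else 0)) \<le> (v j)^2" .
  qed
  finally have "k^2 * (\<Sum>i<n. (v i)^2) \<le> C * (\<Sum>j<n. (v j)^2)" using C0 by (simp add: mult_left_mono)
  moreover from v obtain i0 where "i0 < n" "v i0 \<noteq> 0" by blast
  hence "(\<Sum>i<n. (v i)^2) > 0" by (intro sum_pos2[of _ i0]) auto
  ultimately show ?thesis by simp
qed


lemma closed_reach:
  assumes "E\<^sup>*\<^sup>* i j" "i \<in> S" "\<And>a b. a \<in> S \<Longrightarrow> E a b \<Longrightarrow> b \<in> S"
  shows "j \<in> S"
  using assms(1,2) by (induction rule: rtranclp_induct) (auto intro: assms(3))

lemma finite_graph_edges: "finite (graph_edges n E)"
proof -
  have "graph_edges n E \<subseteq> {..<n} \<times> {..<n}" unfolding graph_edges_def by auto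
  thus ?thesis by (rule finite_subset) auto
qed

lemma edge_in: assumes "simple_graph n E" "E a b" shows "(min a b, max a b) \<in> graph_edges n E"
proof -
  have "a < n" "b < n" "a \<noteq> b" "E b a" using assms unfolding simple_graph_def by metis+
  thus ?thesis using assms(2) unfolding graph_edges_def
    by (cases "a < b") (auto simp: min_def max_def)
qed

lemma conn_edges:
  assumes sg: "simple_graph n E" and cn: "graph_connected n E" and n0: "n > 0"
  shows "n - 1 \<le> card (graph_edges n E)"
proof -
  have Eb: "\<And>i j. E i j \<Longrightarrow> i < n \<and> j < n" and Es: "\<And>i j. E i j \<Longrightarrow> E j i"
    and Ei: "\<And>i. \<not> E i i" using sg unfolding simple_graph_def by auto
  define dist where "dist j = (LEAST k. (E ^^ k) 0 j)" for j
  have ex: "\<exists>k. (E ^^ k) 0 j" if "j < n" for j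
    using cn n0 that unfolding graph_connected_def by (auto simp: rtranclp_power)
  have dd: "(E ^^ dist j) 0 j" if "j < n" for j
    using ex[OF that] unfolding dist_def by (metis LeastI)
  have dle: "dist p \<le> k" if "(E ^^ k) 0 p" for p k
    using that unfolding dist_def by (rule Least_le)
  have parex: "\<exists>p. (E ^^ (dist j - 1)) 0 p \<and> E p j" if "j < n" "j \<noteq> 0" for j
  proof -
    have "dist j \<noteq> 0" using dd[OF that(1)] that(2) by (metis relpowp_0_E)
    then obtain m where m: "dist j = Suc m" by (cases "dist j") auto
    have "(E ^^ Suc m) 0 j" using dd[OF that(1)] m by simp
    then obtain p where "(E ^^ m) 0 p" "E p j" by (rule relpowp_Suc_E)
    thus ?thesis using m by auto
  qed
  define par where "par j = (SOME p. (E ^^ (dist j - 1)) 0 p \<and> E p j)" for j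
  have par: "(E ^^ (dist j - 1)) 0 (par j) \<and> E (par j) j" if "j < n" "j \<noteq> 0" for j
    unfolding par_def by (rule someI_ex[OF parex[OF that]])
  have parlt: "dist (par j) < dist j" if "j < n" "j \<noteq> 0" for j
  proof -
    have "dist j \<noteq> 0" using dd[OF that(1)] that(2) by (metis relpowp_0_E)
    thus ?thesis using dle[of "dist j - 1" "par j"] par[OF that] by auto
  qed
  define g where "g j = (min j (par j), max j (par j))" for j
  have "inj_on g {1..<n}"
  proof (rule inj_onI)
    fix a b assume a: "a \<in> {1..<n}" and b: "b \<in> {1..<n}" and gab: "g a = g b"
    show "a = b"
    proof (rule ccontr)
      assume "a \<noteq> b"
      hence "a = par b \<and> b = par a" using gab unfolding g_def
        by (auto simp: min_def max_def split: if_splits)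
      thus False using parlt[of a] parlt[of b] a b by force
    qed
  qed
  moreover have "g ` {1..<n} \<subseteq> graph_edges n E"
    unfolding g_def using par edge_in[OF sg] Es by force
  ultimately have "card {1..<n} \<le> card (graph_edges n E)"
    using card_inj_on_le finite_graph_edges by blast
  thus ?thesis by simp
qed

lemma no_cycle:
  assumes tr: "is_tree n E" and ab: "E a b"
    and path: "(\<lambda>x y. E x y \<and> {x, y} \<noteq> {a, b})\<^sup>*\<^sup>* a b"
  shows False
proof -
  let ?E' = "\<lambda>x y. E x y \<and> {x, y} \<noteq> {a, b}"
  have sg: "simple_graph n E" and cn: "graph_connected n E" and ce: "card (graph_edges n E) = n - 1"
    using tr unfolding is_tree_def by auto
  have Eb: "\<And>i j. E i j \<Longrightarrow> i < n \<and> j < n" and Es: "\<And>i j. E i j \<Longrightarrow> E j i"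
    and Ei: "\<And>i. \<not> E i i" using sg unfolding simple_graph_def by auto
  have sg': "simple_graph n ?E'" using sg unfolding simple_graph_def by (auto simp: insert_commute)
  have symp: "?E'\<^sup>*\<^sup>* y x" if "?E'\<^sup>*\<^sup>* x y" for x y
    using that
  proof (induction rule: rtranclp_induct)
    case base show ?case by simp
  next
    case (step y z)
    have "?E' z y" using step.hyps(2) Es by (auto simp: insert_commute)
    thus ?case using step.IH by (rule converse_rtranclp_into_rtranclp)
  qed
  have path': "?E'\<^sup>*\<^sup>* b a" using symp[OF path] .
  have step: "?E'\<^sup>*\<^sup>* x y" if "E x y" for x y
  proof (cases "{x, y} = {a, b}")
    case True
    hence "(x = a \<and> y = b) \<or> (x = b \<and> y = a)" by (auto simp: doubleton_eq_iff)
    thus ?thesis using path path' by auto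
  next
    case False thus ?thesis using that by auto
  qed
  have cn': "graph_connected n ?E'"
    unfolding graph_connected_def
  proof (intro allI impI)
    fix i j assume "i < n" "j < n"
    hence "E\<^sup>*\<^sup>* i j" using cn unfolding graph_connected_def by auto
    thus "?E'\<^sup>*\<^sup>* i j"
      by (induction rule: rtranclp_induct) (auto intro: rtranclp_trans step)
  qed
  have abn: "a < n" "b < n" "a \<noteq> b" using Eb[OF ab] Ei ab by auto
  have "graph_edges n ?E' = graph_edges n E - {(min a b, max a b)}"
    unfolding graph_edges_def using abn
    by (auto simp: doubleton_eq_iff min_def max_def)
  moreover have "(min a b, max a b) \<in> graph_edges n E" by (rule edge_in[OF sg ab])
  ultimately have "card (graph_edges n ?E') = n - 2"
    using ce finite_graph_edges by (simp add: card_Diff_singleton)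
  moreover have "n - 1 \<le> card (graph_edges n ?E')" using conn_edges[OF sg' cn'] abn by simp
  ultimately show False using abn by simp
qed

lemma no_triangle:
  assumes tr: "is_tree n E" and "E i a" "E i b" "E a b"
  shows False
proof -
  have Es: "\<And>i j. E i j \<Longrightarrow> E j i" and Ei: "\<And>i. \<not> E i i"
    using tr unfolding is_tree_def simple_graph_def by auto
  have "a \<noteq> i" "b \<noteq> i" "a \<noteq> b" using assms Ei by metis+
  hence "(\<lambda>x y. E x y \<and> {x, y} \<noteq> {a, b})\<^sup>*\<^sup>* a b"
    using assms Es by (intro converse_rtranclp_into_rtranclp[of _ a i] r_into_rtranclp)
      (auto simp: doubleton_eq_iff)
  thus False using no_cycle[OF tr \<open>E a b\<close>] by blast
qed


lemma strict_rowsum: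
  fixes w :: "nat \<times> nat \<Rightarrow> real" and E :: "nat \<Rightarrow> nat \<Rightarrow> bool"
  assumes w0: "\<forall>i<n. \<forall>j<n. w(i,j) \<ge> 0"
    and wpos: "\<forall>i<n. \<forall>j<n. E i j \<longrightarrow> w(i,j) > 0"
    and Eb: "\<forall>i j. E i j \<longrightarrow> i < n \<and> j < n"
    and rows: "\<forall>i<n. (\<Sum>j<n. w(i,j)) \<le> c"
    and i0: "i0 < n" "(\<Sum>j<n. w(i0,j)) < c"
    and conn: "\<forall>i<n. \<forall>j<n. E\<^sup>*\<^sup>* i j"
    and v: "\<exists>i<n. v i \<noteq> 0" and ev: "\<forall>i<n. (\<Sum>j<n. w(i,j) * v j) = k * v i"
  shows "\<bar>k\<bar> < c"
proof -
  have le: "\<bar>k\<bar> \<le> c"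
    by (rule collatz[of n w "\<lambda>_. 1" c v k]) (use w0 rows v ev in auto)
  show ?thesis
  proof (rule ccontr)
    assume "\<not> \<bar>k\<bar> < c"
    hence kc: "\<bar>k\<bar> = c" using le by simp
    have n0: "n > 0" using i0 by simp
    obtain i1 where i1: "i1 < n" "\<forall>j<n. \<bar>v j\<bar> \<le> \<bar>v i1\<bar>"
      using finite_argmax[OF n0, of "\<lambda>j. \<bar>v j\<bar>"] by auto
    define m where "m = \<bar>v i1\<bar>"
    have m0: "m > 0" using v i1 unfolding m_def by force
    let ?S = "{i. i < n \<and> \<bar>v i\<bar> = m}"
    have key: "(\<forall>j<n. E i j \<longrightarrow> \<bar>v j\<bar> = m) \<and> (\<Sum>j<n. w(i,j)) = c" if iS: "i \<in> ?S" for i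
    proof -
      have i: "i < n" "\<bar>v i\<bar> = m" using iS by auto
      have vj: "\<bar>v j\<bar> \<le> m" if "j < n" for j using i1 that unfolding m_def by auto
      have "c * m = \<bar>\<Sum>j<n. w(i,j) * v j\<bar>" using ev i kc by (simp add: abs_mult)
      also have "\<dots> \<le> (\<Sum>j<n. w(i,j) * \<bar>v j\<bar>)"
        using sum_abs[of "\<lambda>j. w(i,j) * v j" "{..<n}"] w0 i by (simp add: abs_mult)
      finally have A: "c * m \<le> (\<Sum>j<n. w(i,j) * \<bar>v j\<bar>)" .
      have B: "(\<Sum>j<n. w(i,j) * \<bar>v j\<bar>) \<le> (\<Sum>j<n. w(i,j) * m)"
        using w0 i vj by (intro sum_mono mult_left_mono) auto
      have C: "(\<Sum>j<n. w(i,j) * m) = m * (\<Sum>j<n. w(i,j))" by (simp add: sum_distrib_left mult.commute)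
      have rc: "(\<Sum>j<n. w(i,j)) = c"
      proof -
        have "c * m \<le> m * (\<Sum>j<n. w(i,j))" using A B C by linarith
        hence "c \<le> (\<Sum>j<n. w(i,j))" using m0 by (simp add: mult.commute)
        thus ?thesis using rows i by (meson order_antisym)
      qed
      have "\<forall>j<n. E i j \<longrightarrow> \<bar>v j\<bar> = m"
      proof (intro allI impI, rule ccontr)
        fix j assume j: "j < n" "E i j" "\<bar>v j\<bar> \<noteq> m"
        hence "\<bar>v j\<bar> < m" using vj by force
        hence "w(i,j) * \<bar>v j\<bar> < w(i,j) * m" using wpos i j by auto
        hence "(\<Sum>j<n. w(i,j) * \<bar>v j\<bar>) < (\<Sum>j<n. w(i,j) * m)"
          using w0 i vj j by (intro sum_strict_mono_ex1) (auto intro: mult_left_mono)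
        thus False using A C rc by (simp add: mult.commute)
      qed
      thus ?thesis using rc by blast
    qed
    have "i0 \<in> ?S"
    proof (rule closed_reach[of E i1])
      show "E\<^sup>*\<^sup>* i1 i0" using conn i1 i0 by blast
      show "i1 \<in> ?S" using i1 m_def by simp
      fix a b assume "a \<in> ?S" "E a b"
      thus "b \<in> ?S" using key Eb by blast
    qed
    from key[OF this] have "(\<Sum>j<n. w(i0,j)) = c" by blast
    thus False using i0(2) by linarith
  qed
qed


lemma tree_basic:
  assumes "is_tree n E"
  shows "\<And>i j. E i j \<Longrightarrow> i < n \<and> j < n" "\<And>i j. E i j \<Longrightarrow> E j i" "\<And>i. \<not> E i i"
    "simple_graph n E" "graph_connected n E" "card (graph_edges n E) = n - 1"
  using assms unfolding is_tree_def simple_graph_def by auto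

lemma deg_le: "deg n E i \<le> n - 1" if "\<not> E i i" "i < n"
proof -
  have "{j. j < n \<and> E i j} \<subseteq> {..<n} - {i}" using that by auto
  hence "deg n E i \<le> card ({..<n} - {i})" unfolding deg_def by (intro card_mono) auto
  also have "\<dots> \<le> n - 1" using that by auto
  finally show ?thesis .
qed

lemma deg_ge1:
  assumes tr: "is_tree n E" and n: "n \<ge> 2" and i: "i < n"
  shows "deg n E i \<ge> 1"
proof -
  obtain j where j: "j < n" "j \<noteq> i" using n i by (metis One_nat_def less_2_cases_iff
        less_le_trans nat_neq_iff zero_less_Suc)
  have "E\<^sup>*\<^sup>* i j" using tree_basic(5)[OF tr] i j unfolding graph_connected_def by auto
  then obtain y where "E i y" using j(2) by (metis converse_rtranclpE)
  hence "y \<in> {j. j < n \<and> E i j}" using tree_basic(1)[OF tr] by auto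
  hence "{j. j < n \<and> E i j} \<noteq> {}" by blast
  thus ?thesis unfolding deg_def by (simp add: Suc_le_eq card_gt_0_iff)
qed

lemma nbr_sum:
  assumes tr: "is_tree n E" and i: "i < n"
  shows "(\<Sum>j\<in>{j. j < n \<and> E i j}. deg n E j) \<le> n - 1"
proof -
  let ?N = "\<lambda>i. {j. j < n \<and> E i j}"
  have "(\<Sum>j\<in>?N i. deg n E j) = card (SIGMA j:?N i. ?N j)"
    unfolding deg_def by (rule card_SigmaI[symmetric]) auto
  also have "\<dots> \<le> card (graph_edges n E)"
  proof (rule card_inj_on_le)
    let ?h = "\<lambda>(j,k). (min j k, max j k)"
    show "inj_on ?h (SIGMA j:?N i. ?N j)"
    proof (rule inj_onI)
      fix x y assume x: "x \<in> (SIGMA j:?N i. ?N j)" and y: "y \<in> (SIGMA j:?N i. ?N j)"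
        and hxy: "?h x = ?h y"
      obtain j k where xjk: "x = (j,k)" by (cases x)
      obtain j' k' where yjk: "y = (j',k')" by (cases y)
      have a: "j \<in> ?N i" "k \<in> ?N j" "j' \<in> ?N i" "k' \<in> ?N j'" using x y xjk yjk by auto
      have h: "(min j k, max j k) = (min j' k', max j' k')" using hxy xjk yjk by simp
      show "x = y"
      proof (rule ccontr)
        assume "\<not> x = y"
        hence "\<not> (j = j' \<and> k = k')" using xjk yjk by simp
        hence "j = k' \<and> k = j'" using h by (auto simp: min_def max_def split: if_splits)
        thus False using a no_triangle[OF tr, of i j j'] by auto
      qed
    qed
    show "?h ` (SIGMA j:?N i. ?N j) \<subseteq> graph_edges n E"
      using edge_in[OF tree_basic(4)[OF tr]] by auto
    show "finite (graph_edges n E)" by (rule finite_graph_edges)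
  qed
  also have "\<dots> = n - 1" using tree_basic(6)[OF tr] .
  finally show ?thesis .
qed

lemma handshake:
  assumes sg: "simple_graph n E"
  shows "(\<Sum>i<n. deg n E i) = 2 * card (graph_edges n E)"
proof -
  let ?N = "\<lambda>i. {j. j < n \<and> E i j}"
  let ?G = "graph_edges n E"
  have "(\<Sum>i<n. deg n E i) = card (SIGMA i:{..<n}. ?N i)"
    unfolding deg_def by (rule card_SigmaI[symmetric]) auto
  also have "(SIGMA i:{..<n}. ?N i) = ?G \<union> prod.swap ` ?G"
    using sg unfolding graph_edges_def simple_graph_def
    by (auto simp: image_iff) (metis linorder_neqE_nat)
  also have "card (?G \<union> prod.swap ` ?G) = card ?G + card (prod.swap ` ?G)"
    by (rule card_Un_disjoint) (auto simp: finite_graph_edges[unfolded graph_edges_def] graph_edges_def)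
  also have "card (prod.swap ` ?G) = card ?G" by (rule card_image) (auto simp: inj_on_def prod_eq_iff)
  finally show ?thesis by simp
qed


definition sw :: "nat \<Rightarrow> nat \<Rightarrow> nat \<Rightarrow> nat" where
  "sw x y i = (if i = x then y else if i = y then x else i)"

lemma sw_bij: assumes "x < n" "y < n" shows "bij_betw (sw x y) {0..<n} {0..<n}"
  by (rule bij_betw_byWitness[of _ "sw x y"]) (use assms in \<open>auto simp: sw_def\<close>)

lemma three_points:
  fixes a1 a2 a3 b1 b2 b3 n :: nat
  assumes "a1 < n" "a2 < n" "a3 < n" "b1 < n" "b2 < n" "b3 < n"
    "a1 \<noteq> a2" "a1 \<noteq> a3" "a2 \<noteq> a3" "b1 \<noteq> b2" "b1 \<noteq> b3" "b2 \<noteq> b3"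
  shows "\<exists>f. bij_betw f {0..<n} {0..<n} \<and> f a1 = b1 \<and> f a2 = b2 \<and> f a3 = b3"
proof -
  define s1 where "s1 = sw a1 b1"
  define s2 where "s2 = sw (s1 a2) b2"
  define s3 where "s3 = sw (s2 (s1 a3)) b3"
  have lt: "s1 a2 < n" "s2 (s1 a3) < n" using assms unfolding s1_def s2_def sw_def by auto
  have bb: "bij_betw s1 {0..<n} {0..<n}" "bij_betw s2 {0..<n} {0..<n}" "bij_betw s3 {0..<n} {0..<n}"
    unfolding s1_def s2_def s3_def using assms lt[unfolded s1_def s2_def] by (auto intro!: sw_bij)
  have bij: "bij_betw (s3 \<circ> s2 \<circ> s1) {0..<n} {0..<n}"
    using bij_betw_trans[OF bij_betw_trans[OF bb(1) bb(2)] bb(3)] by (simp add: comp_assoc)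
  have i1: "inj_on s1 {0..<n}" "inj_on s2 {0..<n}"
    using sw_bij assms lt unfolding s1_def s2_def bij_betw_def by auto
  have e1: "s1 a1 = b1" "s1 a2 \<noteq> b1" "s1 a3 \<noteq> b1" "s1 a2 \<noteq> s1 a3"
    using assms unfolding s1_def sw_def by auto
  have e2: "s2 b1 = b1" "s2 (s1 a2) = b2" "s2 (s1 a3) \<noteq> b1" "s2 (s1 a3) \<noteq> b2"
    using e1 assms unfolding s2_def sw_def by auto
  have e3: "s3 b1 = b1" "s3 b2 = b2" "s3 (s2 (s1 a3)) = b3"
    using e2 assms unfolding s3_def sw_def by auto
  show ?thesis using bij e1 e2 e3 by (intro exI[of _ "s3 \<circ> s2 \<circ> s1"]) auto
qed

lemma iso_star:
  assumes tr: "is_tree n E" and c: "c < n" and dc: "deg n E c = n - 1"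
  shows "graph_iso n E (star_graph n)"
proof -
  note tb = tree_basic[OF tr]
  have "{j. j < n \<and> E c j} \<subseteq> {..<n} - {c}" using tb by auto
  moreover have "card ({..<n} - {c}) = n - 1" using c by simp
  ultimately have Nc: "{j. j < n \<and> E c j} = {..<n} - {c}"
    using dc unfolding deg_def by (intro card_subset_eq) auto
  have Ec: "E c j" if "j < n" "j \<noteq> c" for j using Nc that by blast
  have char: "E i j \<longleftrightarrow> i \<noteq> j \<and> (i = c \<or> j = c)" if "i < n" "j < n" for i j
  proof
    assume e: "E i j"
    show "i \<noteq> j \<and> (i = c \<or> j = c)"
    proof (rule ccontr)
      assume "\<not> ?thesis"
      hence "i \<noteq> c" "j \<noteq> c" using e tb by auto
      thus False using no_triangle[OF tr, of c i j] Ec that e by auto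
    qed
  next
    assume "i \<noteq> j \<and> (i = c \<or> j = c)"
    thus "E i j" using Ec tb that by auto
  qed
  have "bij_betw (sw c 0) {0..<n} {0..<n}" using c by (intro sw_bij) auto
  moreover have "\<forall>i<n. \<forall>j<n. E i j \<longleftrightarrow> star_graph n (sw c 0 i) (sw c 0 j)"
    using char c unfolding star_graph_def sw_def by auto
  ultimately show ?thesis unfolding graph_iso_def by blast
qed

lemma iso_ds:
  assumes tr: "is_tree n E" and n4: "n \<ge> 4" and c: "c < n" and dc: "deg n E c = n - 2"
  shows "graph_iso n E (double_star_graph n)"
proof -
  note tb = tree_basic[OF tr]
  let ?N = "{j. j < n \<and> E c j}"
  have sub: "?N \<subseteq> {..<n} - {c}" using tb by auto
  have "card (({..<n} - {c}) - ?N) = (n - 1) - (n - 2)"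
    using sub c dc unfolding deg_def by (subst card_Diff_subset) auto
  also have "\<dots> = 1" using n4 by simp
  finally obtain z where z: "({..<n} - {c}) - ?N = {z}" by (rule card_1_singletonE)
  have zn: "z < n" "z \<noteq> c" "\<not> E c z" using z by auto
  have Ec: "E c x" if "x < n" "x \<noteq> c" "x \<noteq> z" for x using z that by blast
  have "deg n E z \<ge> 1" using deg_ge1[OF tr _ zn(1)] n4 by simp
  then obtain w where w: "w < n" "E z w"
    unfolding deg_def by (metis (mono_tags, lifting) Collect_empty_eq card.empty not_one_le_zero)
  have wc: "w \<noteq> c" "w \<noteq> z" using w zn tb by auto
  have cw: "E c w" using Ec w wc by simp
  have zonly: "y = w" if "E z y" for y
  proof (rule ccontr)
    assume yw: "y \<noteq> w"
    have y1: "y < n" "y \<noteq> z" using that tb by auto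
    have y2: "y \<noteq> c" using that tb(2) zn(3) by metis
    note y = y1 y2
    have "(\<lambda>x y'. E x y' \<and> {x, y'} \<noteq> {z, y})\<^sup>*\<^sup>* z y"
    proof -
      have "E z w" "{z, w} \<noteq> {z, y}" using w yw by (auto simp: doubleton_eq_iff)
      moreover have "E w c" "{w, c} \<noteq> {z, y}" using cw tb wc y yw by (auto simp: doubleton_eq_iff)
      moreover have "E c y" "{c, y} \<noteq> {z, y}" using Ec y zn by (auto simp: doubleton_eq_iff)
      ultimately show ?thesis
        by (intro converse_rtranclp_into_rtranclp[of _ z w] converse_rtranclp_into_rtranclp[of _ w c]
          r_into_rtranclp) auto
    qed
    thus False using no_cycle[OF tr that] by blast
  qed
  have char: "E i j \<longleftrightarrow> (i = c \<and> j \<noteq> c \<and> j \<noteq> z) \<or> (j = c \<and> i \<noteq> c \<and> i \<noteq> z)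
      \<or> (i = z \<and> j = w) \<or> (i = w \<and> j = z)" if ij: "i < n" "j < n" for i j
  proof
    assume e: "E i j"
    show "(i = c \<and> j \<noteq> c \<and> j \<noteq> z) \<or> (j = c \<and> i \<noteq> c \<and> i \<noteq> z)
      \<or> (i = z \<and> j = w) \<or> (i = w \<and> j = z)"
    proof (cases "i = c \<or> j = c")
      case True thus ?thesis using e tb zn by auto
    next
      case False
      show ?thesis
      proof (cases "i = z \<or> j = z")
        case True
        thus ?thesis using zonly e tb by auto
      next
        case False2: False
        thus ?thesis using no_triangle[OF tr, of c i j] Ec ij e False by auto
      qed
    qed
  next
    assume "(i = c \<and> j \<noteq> c \<and> j \<noteq> z) \<or> (j = c \<and> i \<noteq> c \<and> i \<noteq> z)
      \<or> (i = z \<and> j = w) \<or> (i = w \<and> j = z)"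
    thus "E i j" using Ec tb ij w by auto
  qed
  obtain f where f: "bij_betw f {0..<n} {0..<n}" "f c = 0" "f w = 1" "f z = n - 1"
  proof -
    have "1 \<noteq> n - 1" "0 < n" "1 < n" "n - 1 < n" "(0::nat) \<noteq> n - 1" using n4 by auto
    thus ?thesis using that three_points[of c n w z 0 1 "n - 1"] c w zn wc by auto
  qed
  have inj: "inj_on f {0..<n}" and fr: "\<And>i. i < n \<Longrightarrow> f i < n"
    using f(1) unfolding bij_betw_def by auto
  have f0: "f i = 0 \<longleftrightarrow> i = c" if "i < n" for i
    using inj f(2) c that unfolding inj_on_def by auto
  have f1: "f i = 1 \<longleftrightarrow> i = w" if "i < n" for i
    using inj f(3) w that unfolding inj_on_def by auto
  have fl: "f i = n - 1 \<longleftrightarrow> i = z" if "i < n" for i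
    using inj f(4) zn that unfolding inj_on_def by auto
  have mid: "(1 \<le> f i \<and> f i \<le> n - 2) \<longleftrightarrow> i \<noteq> c \<and> i \<noteq> z" if "i < n" for i
    using f0[OF that] fl[OF that] fr[OF that] by auto
  have "\<forall>i<n. \<forall>j<n. E i j \<longleftrightarrow> double_star_graph n (f i) (f j)"
  proof (intro allI impI)
    fix i j assume ij: "i < n" "j < n"
    show "E i j \<longleftrightarrow> double_star_graph n (f i) (f j)"
      unfolding char[OF ij] double_star_graph_def
      using f0[OF ij(1)] f0[OF ij(2)] f1[OF ij(1)] f1[OF ij(2)] fl[OF ij(1)] fl[OF ij(2)]
        mid[OF ij(1)] mid[OF ij(2)] by auto
  qed
  thus ?thesis using f(1) unfolding graph_iso_def by blast
qed


lemma max_eig_eq: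
  fixes g :: "nat \<times> nat \<Rightarrow> real"
  assumes "eigenvalue (mat n n g) \<mu>" "\<And>k. eigenvalue (mat n n g) k \<Longrightarrow> k \<le> \<mu>"
  shows "Max {k. eigenvalue (mat n n g) k} = \<mu>"
proof -
  have "finite {k. eigenvalue (mat n n g) k}"
    using card_finite_spectrum(1)[of "mat n n g" n] unfolding spectrum_def by simp
  thus ?thesis using assms by (intro Max_eqI) auto
qed

lemma abc_mat_eq: "abc_matrix n E = mat n n (\<lambda>(i, j).
     if E i j then sqrt ((real (deg n E i) + real (deg n E j) - 2) / (real (deg n E i) * real (deg n E j)))
     else 0)" unfolding abc_matrix_def ..

lemma star_deg0: "n \<ge> 1 \<Longrightarrow> deg n (star_graph n) 0 = n - 1"
proof -
  assume "n \<ge> 1"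
  have "{j. j < n \<and> star_graph n 0 j} = {1..<n}" unfolding star_graph_def by auto
  thus ?thesis unfolding deg_def by simp
qed

lemma star_degj: "1 \<le> j \<Longrightarrow> j < n \<Longrightarrow> deg n (star_graph n) j = 1"
proof -
  assume "1 \<le> j" "j < n"
  hence "{k. k < n \<and> star_graph n j k} = {0}" unfolding star_graph_def by auto
  thus ?thesis unfolding deg_def by simp
qed

lemma rho_star:
  assumes n: "n \<ge> 4"
  shows "rho_abc n (star_graph n) = sqrt (real n - 2)"
proof -
  define \<omega> where "\<omega> = sqrt ((real n - 2) / (real n - 1))"
  define g where "g = (\<lambda>(i, j). if star_graph n i j then \<omega> else (0::real))"
  have geq: "abc_matrix n (star_graph n) = mat n n g"
  proof -
    have "(\<lambda>(i, j). if star_graph n i j then sqrt ((real (deg n (star_graph n) i) + real (deg n (star_graph n) j) - 2)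
       / (real (deg n (star_graph n) i) * real (deg n (star_graph n) j))) else 0) = g"
    proof (intro ext, clarify)
      fix i j
      show "(if star_graph n i j then sqrt ((real (deg n (star_graph n) i) + real (deg n (star_graph n) j) - 2)
       / (real (deg n (star_graph n) i) * real (deg n (star_graph n) j))) else 0) = g (i, j)"
      proof (cases "star_graph n i j")
        case True
        hence "(i = 0 \<and> 1 \<le> j \<and> j < n) \<or> (j = 0 \<and> 1 \<le> i \<and> i < n)" unfolding star_graph_def by auto
        thus ?thesis using True star_deg0[of n] star_degj[of j n] star_degj[of i n] n
          unfolding g_def \<omega>_def by (auto simp: of_nat_diff algebra_simps)
      next
        case False thus ?thesis unfolding g_def by simp
      qed
    qed
    thus ?thesis unfolding abc_matrix_def by simp
  qed
  define x :: "nat \<Rightarrow> real" where "x j = (if j = 0 then sqrt (real n - 1) else 1)" for j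
  have sumsplit: "(\<Sum>k<n. h k) = h 0 + (\<Sum>k\<in>{1..<n}. h k)" for h :: "nat \<Rightarrow> real"
  proof -
    have "{..<n} = insert 0 {1..<n}" using n by auto
    thus ?thesis by simp
  qed
  have w2: "\<omega> * sqrt (real n - 1) = sqrt (real n - 2)"
    unfolding \<omega>_def using n by (simp add: real_sqrt_divide)
  have w3: "(real n - 1) * \<omega> = sqrt (real n - 2) * sqrt (real n - 1)"
  proof -
    have "(real n - 1) = sqrt (real n - 1) * sqrt (real n - 1)" using n by simp
    hence "(real n - 1) * \<omega> = sqrt (real n - 1) * (\<omega> * sqrt (real n - 1))" by (metis mult.assoc mult.commute)
    thus ?thesis using w2 by simp
  qed
  have rows: "(\<Sum>j<n. g (i,j) * x j) = sqrt (real n - 2) * x i" if i: "i < n" for i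
  proof (cases "i = 0")
    case True
    have "(\<Sum>j<n. g (i,j) * x j) = g (0,0) * x 0 + (\<Sum>j\<in>{1..<n}. g (0,j) * x j)"
      using True by (simp add: sumsplit)
    also have "\<dots> = (\<Sum>j\<in>{1..<n}. \<omega>)"
    proof -
      have "g (0,0) = 0" unfolding g_def star_graph_def by simp
      moreover have "g (0,j) * x j = \<omega>" if "j \<in> {1..<n}" for j
        using that unfolding g_def star_graph_def x_def by auto
      ultimately show ?thesis by simp
    qed
    also have "\<dots> = (real n - 1) * \<omega>" using n by (simp add: of_nat_diff)
    finally show ?thesis using True w3 unfolding x_def by simp
  next
    case False
    have "(\<Sum>j<n. g (i,j) * x j) = g (i,0) * x 0 + (\<Sum>j\<in>{1..<n}. g (i,j) * x j)"
      by (simp add: sumsplit)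
    also have "(\<Sum>j\<in>{1..<n}. g (i,j) * x j) = 0" unfolding g_def star_graph_def using False
      by (intro sum.neutral) auto
    also have "g (i,0) * x 0 = \<omega> * sqrt (real n - 1)"
      unfolding g_def star_graph_def x_def using False i by auto
    finally show ?thesis using w2 False unfolding x_def by simp
  qed
  have ev: "eigenvalue (mat n n g) (sqrt (real n - 2))"
    unfolding eig_iff using rows n by (intro exI[of _ x]) (auto simp: x_def)
  have bound: "k \<le> sqrt (real n - 2)" if ek: "eigenvalue (mat n n g) k" for k
  proof -
    obtain v where v: "\<exists>i<n. v i \<noteq> 0" "\<forall>i<n. (\<Sum>j<n. g (i,j) * v j) = k * v i"
      using ek unfolding eig_iff by blast
    have "\<bar>k\<bar> \<le> sqrt (real n - 2)"
      by (rule collatz[of n g x _ v]) (use v rows n in \<open>auto simp: g_def \<omega>_def x_def\<close>)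
    thus ?thesis by simp
  qed
  show ?thesis unfolding rho_abc_def geq by (rule max_eig_eq[OF ev bound])
qed


definition dsA :: "nat \<Rightarrow> real" where "dsA n = (real n - 3)^2 / (real n - 2)"
definition dsT :: "nat \<Rightarrow> real" where "dsT n = (1 + dsA n + sqrt (1 + (dsA n)^2)) / 2"

lemma ds_char:
  assumes n: "n \<ge> 4" and ij: "i < n" "j < n"
  shows "double_star_graph n i j \<longleftrightarrow> (i = 0 \<and> j = 1) \<or> (i = 1 \<and> j = 0) \<or> (i = 0 \<and> 2 \<le> j \<and> j \<le> n - 2)
    \<or> (j = 0 \<and> 2 \<le> i \<and> i \<le> n - 2) \<or> (i = 1 \<and> j = n - 1) \<or> (i = n - 1 \<and> j = 1)"
  using assms unfolding double_star_graph_def by auto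

lemma ds_degs:
  assumes n: "n \<ge> 4"
  shows "deg n (double_star_graph n) 0 = n - 2" "deg n (double_star_graph n) 1 = 2"
    "deg n (double_star_graph n) (n - 1) = 1"
    "2 \<le> i \<Longrightarrow> i \<le> n - 2 \<Longrightarrow> deg n (double_star_graph n) i = 1"
proof -
  have "{j. j < n \<and> double_star_graph n 0 j} = {1..n-2}" using n unfolding double_star_graph_def by auto
  thus "deg n (double_star_graph n) 0 = n - 2" unfolding deg_def using n by simp
  have "{j. j < n \<and> double_star_graph n 1 j} = {0, n - 1}" using n unfolding double_star_graph_def by auto
  thus "deg n (double_star_graph n) 1 = 2" unfolding deg_def using n by simp
  have "{j. j < n \<and> double_star_graph n (n - 1) j} = {1}" using n unfolding double_star_graph_def by auto
  thus "deg n (double_star_graph n) (n - 1) = 1" unfolding deg_def by simp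
  assume "2 \<le> i" "i \<le> n - 2"
  hence "{j. j < n \<and> double_star_graph n i j} = {0}" using n unfolding double_star_graph_def by auto
  thus "deg n (double_star_graph n) i = 1" unfolding deg_def by simp
qed

lemma sumsplit4:
  fixes h :: "nat \<Rightarrow> real"
  assumes n: "n \<ge> 4"
  shows "(\<Sum>k<n. h k) = h 0 + h 1 + h (n - 1) + (\<Sum>k\<in>{2..n-2}. h k)"
proof -
  have "{..<n} = insert 0 (insert 1 (insert (n - 1) {2..n-2}))" using n by auto
  moreover have "n - 1 \<notin> {2..n-2}" "0 \<notin> {2..n-2}" "1 \<notin> {2..n-2}" "n - 1 \<noteq> 0" "n - 1 \<noteq> 1"
    using n by auto
  ultimately show ?thesis by (simp add: algebra_simps)
qed

lemma dsT_facts: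
  assumes n: "n \<ge> 4"
  shows "dsT n > 1/2" "(dsT n)^2 - (1 + dsA n) * dsT n + dsA n / 2 = 0" "dsA n > 0"
proof -
  let ?A = "dsA n" let ?r = "sqrt (1 + ?A^2)"
  have A0: "?A > 0" unfolding dsA_def using n by auto
  have rA: "?r > ?A" by (rule real_less_rsqrt) simp
  show "dsT n > 1/2" unfolding dsT_def using A0 rA by simp
  have r2: "?r^2 = 1 + ?A^2" by simp
  show "(dsT n)^2 - (1 + dsA n) * dsT n + dsA n / 2 = 0"
    unfolding dsT_def by (simp add: power2_eq_square field_simps r2[unfolded power2_eq_square])
  show "dsA n > 0" by (rule A0)
qed

lemma rho_ds:
  assumes n: "n \<ge> 4"
  shows "rho_abc n (double_star_graph n) = sqrt (dsT n)"
proof -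
  let ?G = "double_star_graph n"
  define \<alpha> where "\<alpha> = sqrt ((real n - 3) / (real n - 2))"
  define \<beta> where "\<beta> = sqrt (1/2 :: real)"
  define g where "g = (\<lambda>(i, j). if ?G i j then (if i = 1 \<or> j = 1 then \<beta> else \<alpha>) else (0::real))"
  have geq: "abc_matrix n ?G = mat n n g"
  proof -
    have "(\<lambda>(i, j). if ?G i j then sqrt ((real (deg n ?G i) + real (deg n ?G j) - 2)
       / (real (deg n ?G i) * real (deg n ?G j))) else 0) = g"
    proof (intro ext, clarify)
      fix i j
      show "(if ?G i j then sqrt ((real (deg n ?G i) + real (deg n ?G j) - 2)
       / (real (deg n ?G i) * real (deg n ?G j))) else 0) = g (i, j)"
      proof (cases "?G i j")
        case True
        hence ij: "i < n" "j < n" using n unfolding double_star_graph_def by auto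
        have "(i = 0 \<and> j = 1) \<or> (i = 1 \<and> j = 0) \<or> (i = 0 \<and> 2 \<le> j \<and> j \<le> n - 2)
          \<or> (j = 0 \<and> 2 \<le> i \<and> i \<le> n - 2) \<or> (i = 1 \<and> j = n - 1) \<or> (i = n - 1 \<and> j = 1)"
          using True ds_char[OF n ij] by simp
        moreover have "n - 1 \<noteq> 1" "n - 1 \<noteq> 0" "(n - 2 :: nat) \<noteq> 0" using n by auto
        ultimately show ?thesis using True ds_degs[OF n] ds_degs(4)[OF n, of i] ds_degs(4)[OF n, of j] n
          unfolding g_def \<alpha>_def \<beta>_def by (auto simp: of_nat_diff algebra_simps)
      next
        case False thus ?thesis unfolding g_def by simp
      qed
    qed
    thus ?thesis unfolding abc_matrix_def by simp
  qed
  let ?A = "dsA n" let ?t = "dsT n"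
  define lam where "lam = sqrt ?t"
  have t: "?t > 1/2" "?t^2 - (1 + ?A) * ?t + ?A / 2 = 0" using dsT_facts[OF n] by auto
  have l0: "lam > 0" "lam * lam = ?t" unfolding lam_def using t by auto
  have a2: "\<alpha> * \<alpha> = (real n - 3) / (real n - 2)" unfolding \<alpha>_def using n by simp
  have a0: "\<alpha> > 0" unfolding \<alpha>_def using n by simp
  have b2: "\<beta> * \<beta> = 1/2" unfolding \<beta>_def by simp
  have b0: "\<beta> > 0" unfolding \<beta>_def by simp
  have An: "(real n - 3) * (\<alpha> * \<alpha>) = ?A" unfolding a2 dsA_def by (simp add: power2_eq_square)
  define c where "c = \<beta> * lam / (?t - 1/2)"
  define b where "b = \<alpha> / lam"
  define e where "e = \<beta> * c / lam"
  define x :: "nat \<Rightarrow> real" where "x k = (if k = 0 then 1 else if k = 1 then c else if k = n - 1 then e else b)" for k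
  have c0: "c > 0" unfolding c_def using b0 l0 t by auto
  have xpos: "x k > 0" for k unfolding x_def e_def b_def using c0 b0 a0 l0 by auto
  have n1: "n - 1 \<noteq> 1" "n - 1 \<noteq> 0" "(1::nat) < n" "n - 1 < n" using n by auto
  have card2: "real (card {2..n-2}) = real n - 3" using n by (simp add: of_nat_diff)
  have rows: "(\<Sum>j<n. g (i,j) * x j) = lam * x i" if i: "i < n" for i
  proof -
    have gchar: "g (i, j) = (if (i = 0 \<and> j = 1) \<or> (i = 1 \<and> j = 0) \<or> (i = 1 \<and> j = n - 1) \<or> (i = n - 1 \<and> j = 1) then \<beta>
      else if (i = 0 \<and> 2 \<le> j \<and> j \<le> n - 2) \<or> (j = 0 \<and> 2 \<le> i \<and> i \<le> n - 2) then \<alpha> else 0)" if "j < n" for j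
      unfolding g_def using ds_char[OF n i that] n1 by auto
    have kin: "k < n" "k \<noteq> 0" "k \<noteq> 1" "k \<noteq> n - 1" "x k = b" if "k \<in> {2..n-2}" for k
      using that n unfolding x_def by auto
    have g0: "g (i, 0) * x 0 = g (i, 0)" "g (i, 1) * x 1 = g (i, 1) * c" "g (i, n - 1) * x (n - 1) = g (i, n - 1) * e"
      unfolding x_def using n1 by auto
    consider "i = 0" | "i = 1" | "i = n - 1" | "2 \<le> i \<and> i \<le> n - 2" using i n1 by linarith
    thus ?thesis
    proof cases
      case 1
      have "(\<Sum>k\<in>{2..n-2}. g (i,k) * x k) = (\<Sum>k\<in>{2..n-2}. \<alpha> * b)"
        using kin gchar 1 by (intro sum.cong) auto
      moreover have "g (i, 0) = 0" "g (i, 1) = \<beta>" "g (i, n - 1) = 0" using gchar 1 n1 n by auto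
      ultimately have "(\<Sum>j<n. g (i,j) * x j) = \<beta> * c + (\<Sum>k\<in>{2..n-2}. \<alpha> * b)"
        unfolding sumsplit4[OF n] g0 by simp
      also have "\<dots> = \<beta> * c + (real n - 3) * \<alpha> * b" using card2 by simp
      also have "\<dots> = lam * x i"
      proof -
        have "\<beta> * c + (real n - 3) * \<alpha> * b = (1/2) * lam / (?t - 1/2) + ?A / lam"
          unfolding c_def b_def using An b2 by (simp add: field_simps)
        also have "\<dots> = lam"
        proof -
          have tt: "?t = lam * lam" using l0 by simp
          have "?t - 1/2 \<noteq> 0" using t by simp
          hence "lam * lam - 1/2 \<noteq> 0" using tt by simp
          hence "(1/2) * lam / (lam * lam - 1/2) + ?A / lam - lam = ((1/2) * (lam * lam) + ?A * (lam * lam - 1/2) - (lam * lam) * (lam * lam - 1/2)) / (lam * (lam * lam - 1/2))"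
            using l0(1) by (simp add: field_simps)
          hence "(1/2) * lam / (?t - 1/2) + ?A / lam - lam = ((1/2) * ?t + ?A * (?t - 1/2) - ?t * (?t - 1/2)) / (lam * (?t - 1/2))"
            unfolding tt .
          also have "(1/2) * ?t + ?A * (?t - 1/2) - ?t * (?t - 1/2) = - (?t^2 - (1 + ?A) * ?t + ?A / 2)"
            by (simp add: power2_eq_square algebra_simps)
          also have "\<dots> = 0" using t by simp
          finally show ?thesis by simp
        qed
        finally show ?thesis using 1 unfolding x_def by simp
      qed
      finally show ?thesis .
    next
      case 2
      have "(\<Sum>k\<in>{2..n-2}. g (i,k) * x k) = 0"
        using kin gchar 2 by (intro sum.neutral) auto
      moreover have "g (i, 0) = \<beta>" "g (i, 1) = 0" "g (i, n - 1) = \<beta>" using gchar 2 n1 n by auto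
      ultimately have "(\<Sum>j<n. g (i,j) * x j) = \<beta> + \<beta> * e"
        unfolding sumsplit4[OF n] g0 by simp
      also have "\<dots> = lam * x i"
      proof -
        have "?t - 1/2 \<noteq> 0" using t by simp
        have ee: "e = (\<beta> * \<beta>) / (?t - 1/2)" unfolding e_def c_def using l0(1) by simp
        hence "\<beta> + \<beta> * e = \<beta> * (1 + (1/2) / (?t - 1/2))"
          unfolding b2 by (simp add: algebra_simps)
        also have "\<dots> = \<beta> * ?t / (?t - 1/2)" using \<open>?t - 1/2 \<noteq> 0\<close> by (simp add: field_simps)
        also have "\<dots> = lam * c" unfolding c_def using l0 by (simp add: field_simps)
        finally show ?thesis using 2 unfolding x_def by simp
      qed
      finally show ?thesis .
    next
      case 3
      have "(\<Sum>k\<in>{2..n-2}. g (i,k) * x k) = 0"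
        using kin gchar 3 n1 by (intro sum.neutral) auto
      moreover have "g (i, 0) = 0" "g (i, 1) = \<beta>" "g (i, n - 1) = 0" using gchar 3 n1 n by auto
      ultimately have "(\<Sum>j<n. g (i,j) * x j) = \<beta> * c"
        unfolding sumsplit4[OF n] g0 by simp
      also have "\<dots> = lam * x i" using 3 n1 l0 unfolding x_def e_def by simp
      finally show ?thesis .
    next
      case 4
      have "(\<Sum>k\<in>{2..n-2}. g (i,k) * x k) = 0"
        using kin gchar 4 n1 by (intro sum.neutral) auto
      moreover have "g (i, 0) = \<alpha>" "g (i, 1) = 0" "g (i, n - 1) = 0" using gchar 4 n1 n by auto
      ultimately have "(\<Sum>j<n. g (i,j) * x j) = \<alpha>"
        unfolding sumsplit4[OF n] g0 by (simp add: x_def)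
      also have "\<dots> = lam * x i" using 4 n1 l0 unfolding x_def b_def by auto
      finally show ?thesis .
    qed
  qed
  have ev: "eigenvalue (mat n n g) lam"
    unfolding eig_iff using rows n xpos by (intro exI[of _ x]) (auto intro: exI[of _ 0] simp: less_imp_neq[OF xpos[of 0], symmetric])
  have bound: "k \<le> lam" if ek: "eigenvalue (mat n n g) k" for k
  proof -
    obtain v where v: "\<exists>i<n. v i \<noteq> 0" "\<forall>i<n. (\<Sum>j<n. g (i,j) * v j) = k * v i"
      using ek unfolding eig_iff by blast
    have "\<bar>k\<bar> \<le> lam"
      by (rule collatz[of n g x _ v]) (use v rows xpos a0 b0 in \<open>auto simp: g_def\<close>)
    thus ?thesis by simp
  qed
  show ?thesis unfolding rho_abc_def geq lam_def[symmetric] by (rule max_eig_eq[OF ev bound])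
qed


lemma ds_lt_star:
  assumes n: "n \<ge> 4"
  shows "sqrt (dsT n) < sqrt (real n - 2)"
proof -
  let ?A = "dsA n"
  have A0: "?A > 0" using dsT_facts[OF n] by simp
  have An: "?A < real n - 3"
  proof -
    have "(real n - 3)^2 < (real n - 3) * (real n - 2)" using n by (simp add: power2_eq_square)
    thus ?thesis unfolding dsA_def using n by (simp add: divide_less_eq)
  qed
  have pos: "2 * real n - 5 - ?A > 0" using An n by simp
  have "1 + ?A^2 < (2 * real n - 5 - ?A)^2"
  proof -
    have "(2 * real n - 5 - ?A)^2 - (1 + ?A^2) = (2 * real n - 5) * (2 * real n - 5 - 2 * ?A) - 1"
      by (simp add: power2_eq_square algebra_simps)
    moreover have "(2 * real n - 5) * (2 * real n - 5 - 2 * ?A) > 1"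
    proof -
      have "2 * real n - 5 - 2 * ?A > 1" using An by simp
      moreover have "2 * real n - 5 \<ge> 3" using n by simp
      ultimately have "(2 * real n - 5) * (2 * real n - 5 - 2 * ?A) > 3 * 1"
        by (intro mult_le_less_imp_less) auto
      thus ?thesis by simp
    qed
    ultimately show ?thesis by simp
  qed
  hence "sqrt (1 + ?A^2) < 2 * real n - 5 - ?A"
    using pos by (metis abs_of_pos real_sqrt_abs real_sqrt_less_mono)
  hence "dsT n < real n - 2" unfolding dsT_def by simp
  thus ?thesis by (rule real_sqrt_less_mono)
qed

lemma C_lt:
  assumes n: "n \<ge> 6"
  shows "real n - 4 + 2 / (real n - 3) < dsT n"
proof -
  let ?A = "dsA n"
  have rA: "sqrt (1 + ?A^2) > ?A" by (rule real_less_rsqrt) simp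
  hence t: "dsT n > ?A + 1/2" unfolding dsT_def by simp
  have A: "?A = real n - 4 + 1 / (real n - 2)"
    unfolding dsA_def using n by (simp add: field_simps power2_eq_square)
  have "2 / (real n - 3) < 1 / (real n - 2) + 1/2"
  proof -
    have "2 * (2 * (real n - 2)) < 2 * (real n - 3) + (real n - 3) * (real n - 2)"
    proof -
      have "(real n - 6) * (real n - 1) \<ge> 0" using n by simp
      thus ?thesis by (simp add: algebra_simps)
    qed
    thus ?thesis using n by (simp add: field_simps)
  qed
  thus ?thesis using t A by simp
qed

lemma ineq6:
  fixes S :: real and n d :: nat
  assumes n: "n \<ge> 6" and d: "1 \<le> d" "d \<le> n - 3" and S: "S \<le> real n - 1" "S \<le> real d * (real n - 3)"
  shows "(real d * (real d - 2) + S) / real d \<le> real n - 4 + 2 / (real n - 3)"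
proof (cases "d = 1")
  case True
  have "S \<le> real n - 3" using S True by simp
  hence "(real d * (real d - 2) + S) / real d \<le> real n - 4" using True by simp
  moreover have "2 / (real n - 3) \<ge> 0" using n by simp
  ultimately show ?thesis by linarith
next
  case False
  hence d2: "real d \<ge> 2" using d by simp
  have dn: "real d \<le> real n - 3" using d n by (simp add: of_nat_diff)
  have n3: "real n - 3 > 0" using n by simp
  have k1: "real n - 3 - real d \<ge> 0" using dn by simp
  have k2: "real d * (real n - 3) - (real n - 1) \<ge> 0"
  proof -
    have "real d * (real n - 3) \<ge> 2 * (real n - 3)" using d2 n3 by (intro mult_right_mono) auto
    thus ?thesis using n by simp
  qed
  have key: "(real n - 3 - real d) * (real d * (real n - 3) - (real n - 1)) \<ge> 0"
    using k1 k2 by simp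
  have "(real d * (real d - 2) + S) / real d \<le> (real d * (real d - 2) + (real n - 1)) / real d"
    using S d by (intro divide_right_mono) auto
  also have "\<dots> \<le> real n - 4 + 2 / (real n - 3)"
  proof -
    have eqQ: "(real n - 4 + 2 / (real n - 3)) * (real n - 3) = (real n - 4) * (real n - 3) + 2"
      using n3 by (simp add: field_simps)
    have "(real d * (real d - 2) + (real n - 1)) * (real n - 3) \<le> ((real n - 4) * (real n - 3) + 2) * real d"
      using key by (simp add: algebra_simps)
    also have "\<dots> = ((real n - 4 + 2 / (real n - 3)) * (real n - 3)) * real d" unfolding eqQ ..
    also have "\<dots> = ((real n - 4 + 2 / (real n - 3)) * real d) * (real n - 3)" by (simp only: ac_simps)
    finally have "(real d * (real d - 2) + (real n - 1)) * (real n - 3) \<le> ((real n - 4 + 2 / (real n - 3)) * real d) * (real n - 3)" .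
    hence "(real d * (real d - 2) + (real n - 1)) \<le> (real n - 4 + 2 / (real n - 3)) * real d"
      using n3 by (simp add: mult_le_cancel_right)
    thus ?thesis using d2 by (simp add: divide_le_eq)
  qed
  finally show ?thesis .
qed

lemma dsT5: "dsT 5 = 2"
proof -
  have A: "dsA 5 = 4/3" unfolding dsA_def by simp
  have "sqrt (1 + (4/3)^2) = (5/3::real)"
    by (rule real_sqrt_unique) (auto simp: power2_eq_square)
  thus ?thesis unfolding dsT_def A by simp
qed


lemma abc_sq:
  assumes "a \<ge> 1" "b \<ge> 1"
  shows "(sqrt ((real a + real b - 2) / (real a * real b)))^2 * real b = (real a + real b - 2) / real a"
proof -
  have "(real a + real b - 2) / (real a * real b) \<ge> 0" using assms by simp
  hence "(sqrt ((real a + real b - 2) / (real a * real b)))^2 = (real a + real b - 2) / (real a * real b)"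
    by simp
  thus ?thesis using assms by simp
qed

theorem theorem3p1:
  fixes n :: nat and E :: "nat \<Rightarrow> nat \<Rightarrow> bool"
  assumes "n \<ge> 4"
    and "is_tree n E"
    and "\<not> graph_iso n E (star_graph n)"
    and "\<not> graph_iso n E (double_star_graph n)"
  shows "rho_abc n E < rho_abc n (double_star_graph n) \<and>
         rho_abc n (double_star_graph n) < rho_abc n (star_graph n)"
proof -
  note tr = assms(2)
  note tb = tree_basic[OF tr]
  have n4: "n \<ge> 4" by (rule assms(1))
  let ?N = "\<lambda>i. {j. j < n \<and> E i j}"
  have degle: "deg n E i \<le> n - 3" if i: "i < n" for i
  proof -
    have "deg n E i \<le> n - 1" using deg_le[of E i n] tb(3) i by simp
    moreover have "deg n E i \<noteq> n - 1" using iso_star[OF tr i] assms(3) by blast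
    moreover have "deg n E i \<noteq> n - 2" using iso_ds[OF tr n4 i] assms(4) by blast
    ultimately show ?thesis by linarith
  qed
  have deg1: "deg n E i \<ge> 1" if "i < n" for i using deg_ge1[OF tr _ that] n4 by simp
  have hs: "(\<Sum>i<n. deg n E i) = 2 * (n - 1)" using handshake[OF tb(4)] tb(6) by simp
  have n5: "n \<ge> 5"
  proof (rule ccontr)
    assume "\<not> n \<ge> 5"
    hence n4': "n = 4" using n4 by simp
    have "(\<Sum>i<n. deg n E i) \<le> (\<Sum>i<n. 1)" using degle n4' by (intro sum_mono) auto
    thus False using hs n4' by simp
  qed
  define F where "F i j = sqrt ((real (deg n E i) + real (deg n E j) - 2) / (real (deg n E i) * real (deg n E j)))" for i j
  define g where "g = (\<lambda>(i, j). if E i j then F i j else (0::real))"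
  have M: "abc_matrix n E = mat n n g" unfolding abc_matrix_def g_def F_def ..
  have gsym: "\<forall>i<n. \<forall>j<n. g (i,j) = g (j,i)"
    unfolding g_def F_def using tb(2) by (auto simp: add.commute mult.commute)
  have rowN: "(\<Sum>j<n. g (i,j) * h j) = (\<Sum>j\<in>?N i. F i j * h j)" for i h
    unfolding sum_N g_def by (intro sum.cong) auto
  let ?K = "{k. eigenvalue (mat n n g) k}"
  have Kne: "?K \<noteq> {}" using sym_has_eig[of n g] gsym n4 by auto
  have Kfin: "finite ?K"
    using card_finite_spectrum(1)[of "mat n n g" n] unfolding spectrum_def by simp
  have bound: "k < sqrt (dsT n)" if ek: "eigenvalue (mat n n g) k" for k
  proof -
    obtain v where v: "\<exists>i<n. v i \<noteq> 0" "\<forall>i<n. (\<Sum>j<n. g (i,j) * v j) = k * v i"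
      using ek unfolding eig_iff by blast
    show ?thesis
    proof (cases "n \<ge> 6")
      case n6: True
      define C where "C = real n - 4 + 2 / (real n - 3)"
      have C0: "C \<ge> 0" unfolding C_def using n6 by simp
      have Cb: "(\<Sum>j\<in>?N i. (g (i,j))^2 * real (deg n E j)) \<le> C" if i: "i < n" for i
      proof -
        let ?d = "deg n E i"
        let ?S = "real (\<Sum>j\<in>?N i. deg n E j)"
        have "(\<Sum>j\<in>?N i. (g (i,j))^2 * real (deg n E j)) = (\<Sum>j\<in>?N i. (real ?d + real (deg n E j) - 2) / real ?d)"
        proof (intro sum.cong refl)
          fix j assume j: "j \<in> ?N i"
          hence "g (i,j) = F i j" unfolding g_def by simp
          thus "(g (i,j))^2 * real (deg n E j) = (real ?d + real (deg n E j) - 2) / real ?d"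
            unfolding F_def using abc_sq[OF deg1[OF i] deg1[of j]] j by simp
        qed
        also have "\<dots> = (real ?d * (real ?d - 2) + ?S) / real ?d"
        proof -
          have "(\<Sum>j\<in>?N i. (real ?d + real (deg n E j) - 2) / real ?d)
              = (\<Sum>j\<in>?N i. (real ?d - 2) + real (deg n E j)) / real ?d"
            by (simp add: sum_divide_distrib algebra_simps)
          also have "(\<Sum>j\<in>?N i. (real ?d - 2) + real (deg n E j)) = real ?d * (real ?d - 2) + ?S"
            by (simp add: sum.distrib deg_def)
          finally show ?thesis .
        qed
        also have "\<dots> \<le> C" unfolding C_def
        proof (rule ineq6)
          show "6 \<le> n" "1 \<le> ?d" "?d \<le> n - 3" using n6 deg1 degle i by auto
          have "(\<Sum>j\<in>?N i. deg n E j) \<le> n - 1" by (rule nbr_sum[OF tr i])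
          hence "?S \<le> real (n - 1)" by (simp only: of_nat_le_iff)
          thus "?S \<le> real n - 1" using n6 by (simp only: of_nat_diff)
          have "(\<Sum>j\<in>?N i. deg n E j) \<le> card (?N i) * (n - 3)"
            using sum_bounded_above[of "?N i" "deg n E" "n - 3"] degle by simp
          hence "?S \<le> real (?d * (n - 3))" unfolding deg_def[of n E i] by linarith
          thus "?S \<le> real ?d * (real n - 3)" using n6 by (simp add: of_nat_diff)
        qed
        finally show ?thesis .
      qed
      have "k^2 \<le> C"
        by (rule cs_bound[of E n g "deg n E" C v k]) (use tb(2) Cb C0 v in \<open>auto simp: g_def deg_def\<close>)
      also have "C < dsT n" unfolding C_def by (rule C_lt[OF n6])
      finally have "sqrt (k^2) < sqrt (dsT n)" by (rule real_sqrt_less_mono)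
      thus ?thesis by simp
    next
      case False
      hence n5': "n = 5" using n5 by simp
      have d2: "deg n E i \<le> 2" if "i < n" for i using degle[OF that] n5' by simp
      have Fle: "F i j \<le> sqrt (1/2)" if "i < n" "j < n" for i j
      proof -
        have "deg n E i = 1 \<or> deg n E i = 2" "deg n E j = 1 \<or> deg n E j = 2"
          using d2 deg1 that by (metis le_antisym not_less_eq_eq numeral_2_eq_2 One_nat_def)+
        hence "(real (deg n E i) + real (deg n E j) - 2) / (real (deg n E i) * real (deg n E j)) \<le> 1/2"
          by auto
        thus ?thesis unfolding F_def by (rule real_sqrt_le_mono)
      qed
      have rowle: "(\<Sum>j<n. g (i,j)) \<le> real (deg n E i) * sqrt (1/2)" if i: "i < n" for i
      proof -
        have "(\<Sum>j<n. g (i,j)) = (\<Sum>j<n. g (i,j) * 1)" by simp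
        also have "\<dots> = (\<Sum>j\<in>?N i. F i j * 1)" by (rule rowN)
        also have "\<dots> \<le> (\<Sum>j\<in>?N i. sqrt (1/2))" using Fle i by (intro sum_mono) auto
        also have "\<dots> = real (deg n E i) * sqrt (1/2)" unfolding deg_def by simp
        finally show ?thesis .
      qed
      have s2: "2 * sqrt (1/2) = sqrt (2::real)"
      proof -
        have a: "sqrt (1/2::real) = 1 / sqrt 2" by (simp add: real_sqrt_divide)
        have "2 * sqrt (1/2::real) = (sqrt 2 * sqrt 2) * (1 / sqrt 2)" unfolding a by simp
        also have "\<dots> = sqrt 2" by (simp del: real_sqrt_mult_self)
        finally show ?thesis .
      qed
      have rows: "\<forall>i<n. (\<Sum>j<n. g (i,j)) \<le> sqrt 2"
      proof (intro allI impI)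
        fix i assume i: "i < n"
        have "real (deg n E i) * sqrt (1/2) \<le> 2 * sqrt (1/2)" using d2[OF i] by (intro mult_right_mono) auto
        thus "(\<Sum>j<n. g (i,j)) \<le> sqrt 2" using rowle[OF i] s2 by linarith
      qed
      obtain i0 where i0: "i0 < n" "deg n E i0 = 1"
      proof -
        have "\<exists>i<n. deg n E i < 2"
        proof (rule ccontr)
          assume "\<not> ?thesis"
          hence "(\<Sum>i<n. 2) \<le> (\<Sum>i<n. deg n E i)" by (intro sum_mono) auto
          thus False using hs n5' by simp
        qed
        then obtain i where "i < n" "deg n E i < 2" by blast
        thus ?thesis using that deg1 by (metis One_nat_def le_antisym less_2_cases_iff not_one_le_zero)
      qed
      have row0: "(\<Sum>j<n. g (i0,j)) < sqrt 2"
      proof -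
        have "sqrt (1/2) < sqrt (2::real)" by (rule real_sqrt_less_mono) simp
        moreover have "(\<Sum>j<n. g (i0,j)) \<le> sqrt (1/2)" using rowle[OF i0(1)] i0(2) by simp
        ultimately show ?thesis by linarith
      qed
      have notboth: "\<not> (deg n E i = 1 \<and> deg n E j = 1)" if e: "E i j" for i j
      proof
        assume dd: "deg n E i = 1 \<and> deg n E j = 1"
        have ij: "i < n" "j < n" "i \<noteq> j" using e tb by blast+
        have Ni: "?N i = {j}"
        proof -
          have "j \<in> ?N i" using ij e by simp
          moreover obtain a where "?N i = {a}" using dd unfolding deg_def by (metis card_1_singletonE)
          ultimately show ?thesis by simp
        qed
        have Nj: "?N j = {i}"
        proof -
          have "i \<in> ?N j" using ij e tb(2) by simp
          moreover obtain a where "?N j = {a}" using dd unfolding deg_def by (metis card_1_singletonE)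
          ultimately show ?thesis by simp
        qed
        obtain k where k: "k < n" "k \<noteq> i" "k \<noteq> j"
        proof -
          have "card ({..<n} - {i, j}) \<ge> 3"
          proof -
            have "card ({..<n} - {i, j}) = n - 2" using ij by (simp add: card_Diff_subset)
            thus ?thesis using n5' by simp
          qed
          hence "{..<n} - {i, j} \<noteq> {}" by (intro notI) simp
          thus ?thesis using that by auto
        qed
        have "E\<^sup>*\<^sup>* i k" using tb(5) ij k unfolding graph_connected_def by auto
        hence "k \<in> {i, j}"
        proof (rule closed_reach)
          show "i \<in> {i, j}" by simp
          fix a b assume "a \<in> {i, j}" "E a b"
          moreover have "b < n" using \<open>E a b\<close> tb by blast
          ultimately show "b \<in> {i, j}" using Ni Nj by auto
        qed
        thus False using k by auto
      qed
      have wpos: "\<forall>i<n. \<forall>j<n. E i j \<longrightarrow> g (i,j) > 0"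
      proof (intro allI impI)
        fix i j assume ij: "i < n" "j < n" "E i j"
        have "real (deg n E i) + real (deg n E j) - 2 > 0"
          using notboth[OF ij(3)] deg1[OF ij(1)] deg1[OF ij(2)] by linarith
        moreover have "real (deg n E i) * real (deg n E j) > 0"
          using deg1[OF ij(1)] deg1[OF ij(2)] by (intro mult_pos_pos) auto
        ultimately show "g (i,j) > 0" unfolding g_def F_def using ij by simp
      qed
      have w0: "\<forall>i<n. \<forall>j<n. g (i,j) \<ge> 0"
      proof (intro allI impI)
        fix i j assume "i < n" "j < n"
        thus "g (i,j) \<ge> 0" using wpos by (cases "E i j") (auto simp: g_def less_imp_le)
      qed
      have "\<bar>k\<bar> < sqrt 2"
        by (rule strict_rowsum[of n g E "sqrt 2" i0 v k])
          (use w0 wpos tb(1) rows i0 row0 tb(5) v in \<open>auto simp: graph_connected_def\<close>)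
      thus ?thesis using dsT5 n5' by simp
    qed
  qed
  have "Max ?K \<in> ?K" using Kfin Kne by (rule Max_in)
  hence "Max ?K < sqrt (dsT n)" using bound by blast
  hence 1: "rho_abc n E < rho_abc n (double_star_graph n)"
    unfolding rho_abc_def[of n E] M rho_ds[OF n4] .
  have 2: "rho_abc n (double_star_graph n) < rho_abc n (star_graph n)"
    unfolding rho_ds[OF n4] rho_star[OF n4] by (rule ds_lt_star[OF n4])
  show ?thesis using 1 2 by blast
qed


end
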